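(* Let $m\ge2$, $k\ge1$, $n\ge1$, $\mathcal{A}\in\mathbb{R}_+^{[m,n]}$ and $\mathcal{B}\in\mathbb{R}_+^{[k,n]}$ with $r_i(\mathcal{B})\neq0$ for all $i\in[n]$. Then \[\min_{i\in[n]}\frac{r_i(\mathcal{A}\mathcal{B})}{(r_i(\mathcal{B}))^{m-1}}\le\rho(\mathcal{A})\le\max_{i\in[n]}\frac{r_i(\mathcal{A}\mathcal{B})}{(r_i(\mathcal{B}))^{m-1}}.\]
   Context: $[n]=\{1,\ldots,n\}$. $\mathbb{C}^{[m,n]}$ (resp. $\mathbb{R}_+^{[m,n]}$) denotes the set of order $m$, dimension $n$ tensors $\mathcal{A}=(a_{i_1\cdots i_m})$, $i_j\in[n]$, with complex (resp. nonnegative real) entries; for $k=1$ these are vectors in $\mathbb{C}^n$ (resp. nonnegative vectors). For a tensor $\mathcal{T}=(t_{i_1\cdots i_p})$ of order $p$ and dimension $n$, $r_i(\mathcal{T})=\sum_{i_2,\ldots,i_p=1}^n|t_{ii_2\cdots i_p}|$ (for $p=1$, $r_i(\mathcal{T})=|t_i|$). General product: for $\mathcal{A}\in\mathbb{C}^{[m,n]}$ ($m\ge2$), $\mathcal{B}\in\mathbb{C}^{[k,n]}$ ($k\ge1$), $\mathcal{A}\mathcal{B}=(c_{i\alpha_1\cdots\alpha_{m-1}})$ is the order $(m-1)(k-1)+1$, dimension $n$ tensor with $c_{i\alpha_1\cdots\alpha_{m-1}}=\sum_{i_2,\ldots,i_m=1}^n a_{ii_2\cdots i_m}b_{i_2\alpha_1}\cdots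 b_{i_m\alpha_{m-1}}$, $i\in[n]$, $\alpha_j\in[n]^{k-1}$ (where $b_{j\alpha}$ with $\alpha=(j_2,\ldots,j_k)$ means $b_{jj_2\cdots j_k}$). Eigenvalues: for $\mathcal{A}\in\mathbb{C}^{[m,n]}$ and $x\in\mathbb{C}^n$, $(\mathcal{A}x^{m-1})_i=\sum_{i_2,\ldots,i_m=1}^n a_{ii_2\cdots i_m}x_{i_2}\cdots x_{i_m}$; $\lambda\in\mathbb{C}$ is an eigenvalue of $\mathcal{A}$ if there is a nonzero $x\in\mathbb{C}^n$ with $\mathcal{A}x^{m-1}=\lambda x^{[m-1]}$, where $x^{[m-1]}=(x_1^{m-1},\ldots,x_n^{m-1})^{\mathrm T}$. The spectral radius $\rho(\mathcal{A})$ is the maximum modulus of the eigenvalues of $\mathcal{A}$. *)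

theory Defs
  imports Complex_Main
begin

text \<open>A tensor of order p and dimension n is a function on index lists of length p
  with entries in {0..<n} (indices are 0-based: [n] is rendered as {..<n}).
  Values outside this domain are irrelevant.\<close>

definition idx :: "nat \<Rightarrow> nat \<Rightarrow> nat list set" where
  "idx p n = {xs. length xs = p \<and> set xs \<subseteq> {..<n}}"

definition nonneg_tensor :: "nat \<Rightarrow> nat \<Rightarrow> (nat list \<Rightarrow> real) \<Rightarrow> bool" where
  "nonneg_tensor p n T \<longleftrightarrow> (\<forall>l\<in>idx p n. 0 \<le> T l)"

definition row_sum :: "nat \<Rightarrow> nat \<Rightarrow> (nat list \<Rightarrow> real) \<Rightarrow> nat \<Rightarrow> real" where
  "row_sum p n T i = (\<Sum>xs\<in>idx (p - 1) n. \<bar>T (i # xs)\<bar>)"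

text \<open>General product AB of A (order m) and B (order k), of order (m-1)(k-1)+1:
  an index list i # \<alpha>_1 @ ... @ \<alpha>_{m-1} with each \<alpha>_j of length k-1.\<close>
definition gen_prod :: "nat \<Rightarrow> nat \<Rightarrow> nat \<Rightarrow> (nat list \<Rightarrow> real) \<Rightarrow> (nat list \<Rightarrow> real)
    \<Rightarrow> (nat list \<Rightarrow> real)" where
  "gen_prod m k n A B l =
     (let i = hd l; rest = tl l;
          alpha = (\<lambda>j. take (k - 1) (drop (j * (k - 1)) rest))
      in \<Sum>is\<in>idx (m - 1) n. A (i # is) * (\<Prod>j<m - 1. B ((is ! j) # alpha j)))"

definition tensor_apply :: "nat \<Rightarrow> nat \<Rightarrow> (nat list \<Rightarrow> real) \<Rightarrow> (nat \<Rightarrow> complex) \<Rightarrow> nat \<Rightarrow> complex" where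
  "tensor_apply m n A x i =
     (\<Sum>is\<in>idx (m - 1) n. complex_of_real (A (i # is)) * (\<Prod>j<m - 1. x (is ! j)))"

definition tensor_eigenvalue :: "nat \<Rightarrow> nat \<Rightarrow> (nat list \<Rightarrow> real) \<Rightarrow> complex \<Rightarrow> bool" where
  "tensor_eigenvalue m n A lam \<longleftrightarrow>
     (\<exists>x. (\<exists>i<n. x i \<noteq> 0) \<and> (\<forall>i<n. tensor_apply m n A x i = lam * x i ^ (m - 1)))"

definition tensor_spectral_radius :: "nat \<Rightarrow> nat \<Rightarrow> (nat list \<Rightarrow> real) \<Rightarrow> real" where
  "tensor_spectral_radius m n A = Sup {cmod lam | lam. tensor_eigenvalue m n A lam}"

end

theory Submission imports Defs begin

lemma finite_idx[simp]: "finite (idx p n)"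
proof -
  have "idx p n = {xs. set xs \<subseteq> {..<n} \<and> length xs = p}" unfolding idx_def by auto
  then show ?thesis using finite_lists_length_eq[of "{..<n}" p] by simp
qed

lemma idx_0[simp]: "idx 0 n = {[]}" unfolding idx_def by auto

lemma idx_nth: "xs \<in> idx p n \<Longrightarrow> j < p \<Longrightarrow> xs ! j < n"
  unfolding idx_def by (auto dest!: nth_mem)

lemma idx_Cons: "i < n \<Longrightarrow> xs \<in> idx p n \<Longrightarrow> i # xs \<in> idx (Suc p) n"
  unfolding idx_def by auto

lemma idx_append: "idx (q + s) n = (\<lambda>(a,r). a @ r) ` (idx q n \<times> idx s n)"
proof
  show "idx (q + s) n \<subseteq> (\<lambda>(a,r). a @ r) ` (idx q n \<times> idx s n)"
  proof
    fix xs assume "xs \<in> idx (q+s) n"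
    then have "xs = take q xs @ drop q xs" "take q xs \<in> idx q n" "drop q xs \<in> idx s n"
      unfolding idx_def by (auto dest: in_set_takeD in_set_dropD)
    then show "xs \<in> (\<lambda>(a,r). a @ r) ` (idx q n \<times> idx s n)"
      by (intro image_eqI[where x="(take q xs, drop q xs)"]) auto
  qed
next
  show "(\<lambda>(a,r). a @ r) ` (idx q n \<times> idx s n) \<subseteq> idx (q + s) n"
    by (auto simp: idx_def)
qed

lemma idx_append_inj: "inj_on (\<lambda>(a,r). a @ r) (idx q n \<times> idx s n)"
  unfolding inj_on_def idx_def by auto

lemma sum_blocks:
  fixes f :: "nat \<Rightarrow> nat list \<Rightarrow> real"
  shows "(\<Sum>xs\<in>idx (p*q) n. \<Prod>j<p. f j (take q (drop (j*q) xs)))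
       = (\<Prod>j<p. \<Sum>a\<in>idx q n. f j a)"
proof (induction p arbitrary: f)
  case 0
  then show ?case by simp
next
  case (Suc p)
  have "(\<Sum>xs\<in>idx (Suc p*q) n. \<Prod>j<Suc p. f j (take q (drop (j*q) xs)))
     = (\<Sum>xs\<in>idx (q + p*q) n. \<Prod>j<Suc p. f j (take q (drop (j*q) xs)))" by simp
  also have "\<dots> = (\<Sum>(a,r)\<in>idx q n \<times> idx (p*q) n. \<Prod>j<Suc p. f j (take q (drop (j*q) (a@r))))"
    unfolding idx_append by (subst sum.reindex[OF idx_append_inj]) (simp add: case_prod_unfold)
  also have "\<dots> = (\<Sum>(a,r)\<in>idx q n \<times> idx (p*q) n. f 0 a * (\<Prod>j<p. f (Suc j) (take q (drop (j*q) r))))"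
  proof (rule sum.cong[OF refl], clarify)
    fix a r assume a: "a \<in> idx q n"
    then have la: "length a = q" by (simp add: idx_def)
    show "(\<Prod>j<Suc p. f j (take q (drop (j*q) (a@r)))) = f 0 a * (\<Prod>j<p. f (Suc j) (take q (drop (j*q) r)))"
      unfolding prod.lessThan_Suc_shift using la by simp
  qed
  also have "\<dots> = (\<Sum>a\<in>idx q n. f 0 a) * (\<Sum>r\<in>idx (p*q) n. \<Prod>j<p. f (Suc j) (take q (drop (j*q) r)))"
    by (simp add: sum_product sum.cartesian_product)
  also have "\<dots> = (\<Prod>j<Suc p. \<Sum>a\<in>idx q n. f j a)"
    using Suc.IH[of "\<lambda>j. f (Suc j)"] by (simp only: prod.lessThan_Suc_shift)
  finally show ?case .
qed


lemma swap_aux: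
  fixes A :: "'b \<Rightarrow> real" and G :: "'a \<Rightarrow> 'b \<Rightarrow> real"
  shows "(\<Sum>x\<in>X. \<Sum>y\<in>Y. A y * G x y) = (\<Sum>y\<in>Y. A y * (\<Sum>x\<in>X. G x y))"
  by (simp add: sum_distrib_left sum.swap[of _ Y X])

lemma rowsum_gen_prod:
  assumes m: "m \<ge> 2" and k: "k \<ge> 1" and A: "nonneg_tensor m n A" and B: "nonneg_tensor k n B"
    and i: "i < n"
  shows "row_sum ((m - 1) * (k - 1) + 1) n (gen_prod m k n A B) i
       = (\<Sum>is\<in>idx (m - 1) n. A (i # is) * (\<Prod>j<m - 1. row_sum k n B (is ! j)))"
proof -
  define p where "p = m - 1"
  define q where "q = k - 1"
  have mp: "m = Suc p" and kq: "k = Suc q" using m k by (auto simp: p_def q_def)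
  have Ann: "\<And>is. is \<in> idx p n \<Longrightarrow> 0 \<le> A (i # is)"
    using A i unfolding nonneg_tensor_def mp by (auto intro: idx_Cons)
  have Bnn: "\<And>j a. j < n \<Longrightarrow> a \<in> idx q n \<Longrightarrow> 0 \<le> B (j # a)"
    using B unfolding nonneg_tensor_def kq by (auto intro: idx_Cons)
  have blk: "\<And>xs j. xs \<in> idx (p*q) n \<Longrightarrow> j < p \<Longrightarrow> take q (drop (j*q) xs) \<in> idx q n"
  proof -
    fix xs j assume xs: "xs \<in> idx (p*q) n" and j: "j < p"
    have "j*q + q \<le> p*q" using j by (metis add.commute mult_Suc less_eq_Suc_le mult_le_mono1)
    then show "take q (drop (j*q) xs) \<in> idx q n" using xs unfolding idx_def
      by (auto dest: in_set_takeD in_set_dropD)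
  qed
  have gp: "\<And>xs. gen_prod m k n A B (i # xs) = (\<Sum>is\<in>idx p n. A (i # is) * (\<Prod>j<p. B ((is ! j) # take q (drop (j*q) xs))))"
    unfolding gen_prod_def p_def q_def by simp
  have "row_sum ((m - 1) * (k - 1) + 1) n (gen_prod m k n A B) i
     = (\<Sum>xs\<in>idx (p*q) n. \<Sum>is\<in>idx p n. A (i # is) * (\<Prod>j<p. B ((is ! j) # take q (drop (j*q) xs))))"
    unfolding row_sum_def p_def[symmetric] q_def[symmetric] diff_add_inverse2
  proof (rule sum.cong[OF refl])
    fix xs assume xs: "xs \<in> idx (p*q) n"
    show "\<bar>gen_prod m k n A B (i # xs)\<bar> = (\<Sum>is\<in>idx p n. A (i # is) * (\<Prod>j<p. B ((is ! j) # take q (drop (j*q) xs))))"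
      unfolding gp using Ann Bnn blk[OF xs] idx_nth
      by (intro abs_of_nonneg sum_nonneg mult_nonneg_nonneg prod_nonneg) auto
  qed
  also have "\<dots> = (\<Sum>is\<in>idx p n. A (i # is) * (\<Sum>xs\<in>idx (p*q) n. \<Prod>j<p. B ((is ! j) # take q (drop (j*q) xs))))"
    by (rule swap_aux)
  also have "\<dots> = (\<Sum>is\<in>idx p n. A (i # is) * (\<Prod>j<p. row_sum k n B (is ! j)))"
  proof (rule sum.cong[OF refl])
    fix js assume js: "js \<in> idx p n"
    have "(\<Sum>xs\<in>idx (p*q) n. \<Prod>j<p. B ((js ! j) # take q (drop (j*q) xs)))
        = (\<Prod>j<p. \<Sum>a\<in>idx q n. B ((js ! j) # a))"
      by (rule sum_blocks[of "\<lambda>j a. B ((js ! j) # a)"])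
    also have "\<dots> = (\<Prod>j<p. row_sum k n B (js ! j))"
      unfolding row_sum_def q_def using Bnn idx_nth[OF js]
      by (intro prod.cong refl sum.cong) (auto simp: q_def)
    finally show "A (i # js) * (\<Sum>xs\<in>idx (p*q) n. \<Prod>j<p. B ((js ! j) # take q (drop (j*q) xs)))
        = A (i # js) * (\<Prod>j<p. row_sum k n B (js ! j))" by simp
  qed
  finally show ?thesis unfolding p_def .
qed


definition tapp :: "nat \<Rightarrow> nat \<Rightarrow> (nat list \<Rightarrow> real) \<Rightarrow> (nat \<Rightarrow> real) \<Rightarrow> nat \<Rightarrow> real" where
  "tapp p n P x i = (\<Sum>js\<in>idx p n. P (i # js) * (\<Prod>j<p. x (js ! j)))"

definition smp :: "nat \<Rightarrow> (nat \<Rightarrow> real) \<Rightarrow> bool" where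
  "smp n x \<longleftrightarrow> (\<forall>i<n. 0 \<le> x i) \<and> (\<Sum>i<n. x i) = 1"

lemma smp_le1: "smp n x \<Longrightarrow> i < n \<Longrightarrow> x i \<le> 1"
proof -
  assume a: "smp n x" "i < n"
  have "x i \<le> (\<Sum>i<n. x i)" using a unfolding smp_def by (intro member_le_sum) auto
  then show ?thesis using a unfolding smp_def by simp
qed

lemma bw:
  fixes X :: "nat \<Rightarrow> nat \<Rightarrow> real"
  assumes "\<And>k i. i < n \<Longrightarrow> \<bar>X k i\<bar> \<le> B"
  shows "\<exists>r L. strict_mono r \<and> (\<forall>i<n. (\<lambda>k. X (r k) i) \<longlonglongrightarrow> L i)"
  using assms
proof (induction n)
  case 0
  show ?case by (rule exI[of _ id]) (auto simp: strict_mono_def)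
next
  case (Suc n)
  then obtain r L where r: "strict_mono r" and L: "\<forall>i<n. (\<lambda>k. X (r k) i) \<longlonglongrightarrow> L i" by auto
  obtain s where s: "strict_mono s" and ms: "monoseq (\<lambda>k. X (r (s k)) n)"
    using seq_monosub[of "\<lambda>k. X (r k) n"] by auto
  have "Bseq (\<lambda>k. X (r (s k)) n)"
    by (rule BseqI'[of _ B]) (use Suc.prems in auto)
  then obtain l where l: "(\<lambda>k. X (r (s k)) n) \<longlonglongrightarrow> l"
    using Bseq_monoseq_convergent[OF _ ms] by (auto simp: convergent_def)
  show ?case
  proof (intro exI conjI allI impI)
    show "strict_mono (r \<circ> s)" using r s by (rule strict_mono_o)
    fix i assume i: "i < Suc n"
    show "(\<lambda>k. X ((r \<circ> s) k) i) \<longlonglongrightarrow> (L(n := l)) i"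
    proof (cases "i = n")
      case True then show ?thesis using l by simp
    next
      case False
      then have "i < n" using i by simp
      then have "(\<lambda>k. X (r k) i) \<longlonglongrightarrow> L i" using L by simp
      from LIMSEQ_subseq_LIMSEQ[OF this s] False show ?thesis by (simp add: o_def)
    qed
  qed
qed

lemma tapp_tendsto:
  assumes X: "\<And>i. i < n \<Longrightarrow> (\<lambda>k. X k i) \<longlonglongrightarrow> L i"
    and P: "\<And>l. (\<lambda>k. P k l) \<longlonglongrightarrow> Q l"
  shows "(\<lambda>k. tapp p n (P k) (X k) i) \<longlonglongrightarrow> tapp p n Q L i"
  unfolding tapp_def
  by (intro tendsto_sum tendsto_mult tendsto_prod P X idx_nth) auto

lemma tapp_scale: "tapp p n P (\<lambda>j. c * x j) i = c ^ p * tapp p n P x i"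
  unfolding tapp_def by (simp add: prod.distrib sum_distrib_left mult_ac)

lemma tapp_mono:
  assumes P: "\<And>js. js \<in> idx p n \<Longrightarrow> 0 \<le> P (i # js)"
    and xy: "\<And>j. j < n \<Longrightarrow> 0 \<le> x j \<and> x j \<le> y j"
  shows "tapp p n P x i \<le> tapp p n P y i"
  unfolding tapp_def
  by (intro sum_mono mult_left_mono prod_mono P) (auto intro!: xy[THEN conjunct1] xy[THEN conjunct2] idx_nth)

lemma ub_real:
  assumes p: "p \<ge> 1" and n: "n \<ge> 1" and P: "\<And>i js. i < n \<Longrightarrow> js \<in> idx p n \<Longrightarrow> 0 \<le> P (i # js)"
    and x: "smp n x" and eig: "\<And>i. i < n \<Longrightarrow> lam * x i ^ p \<le> tapp p n P x i"
  shows "lam \<le> Max ((\<lambda>i. tapp p n P (\<lambda>_. 1) i) ` {..<n})"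
proof -
  have "Max (x ` {..<n}) \<in> x ` {..<n}" proof (rule Max_in)
    have "x 0 \<in> x ` {..<n}" using n by simp
    then show "x ` {..<n} \<noteq> {}" by blast
  qed simp
  then obtain i0 where i0: "i0 < n" "x i0 = Max (x ` {..<n})" by auto
  have xmax: "\<And>j. j < n \<Longrightarrow> x j \<le> x i0" using i0 by simp
  have "0 < x i0"
  proof (rule ccontr)
    assume "\<not> 0 < x i0"
    then have "\<And>j. j < n \<Longrightarrow> x j = 0" using xmax x unfolding smp_def by force
    then show False using x unfolding smp_def by simp
  qed
  have "lam * x i0 ^ p \<le> tapp p n P x i0" using eig[OF i0(1)] by simp
  also have "\<dots> \<le> tapp p n P (\<lambda>j. x i0 * 1) i0"
    by (rule tapp_mono) (use P i0 x xmax in \<open>auto simp: smp_def\<close>)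
  also have "\<dots> = x i0 ^ p * tapp p n P (\<lambda>_. 1) i0" by (rule tapp_scale)
  finally have "lam \<le> tapp p n P (\<lambda>_. 1) i0"
    using \<open>0 < x i0\<close> by (simp add: mult.commute)
  also have "\<dots> \<le> Max ((\<lambda>i. tapp p n P (\<lambda>_. 1) i) ` {..<n})" using i0 by simp
  finally show ?thesis .
qed


lemma replicate_idx: "j < n \<Longrightarrow> replicate p j \<in> idx p n"
  unfolding idx_def by auto

lemma prod_replicate: "(\<Prod>j<p. x (replicate p i ! j)) = x i ^ p"
  by (simp add: prod_constant)

lemma tapp_nonneg:
  assumes P: "\<And>js. js \<in> idx p n \<Longrightarrow> 0 \<le> P (i # js)" and x: "\<And>j. j < n \<Longrightarrow> 0 \<le> x j"
  shows "0 \<le> tapp p n P x i"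
  unfolding tapp_def by (intro sum_nonneg mult_nonneg_nonneg prod_nonneg P x idx_nth) auto

lemma tapp_pos:
  assumes P: "\<And>js. js \<in> idx p n \<Longrightarrow> 0 < P (i # js)" and x: "\<And>j. j < n \<Longrightarrow> 0 \<le> x j"
    and j0: "j0 < n" "0 < x j0"
  shows "0 < tapp p n P x i"
  unfolding tapp_def
proof (rule sum_pos2[OF finite_idx replicate_idx[OF j0(1)]])
  show "0 < P (i # replicate p j0) * (\<Prod>j<p. x (replicate p j0 ! j))"
    unfolding prod_replicate using P[OF replicate_idx[OF j0(1)]] j0 by simp
  show "\<And>js. js \<in> idx p n \<Longrightarrow> 0 \<le> P (i # js) * (\<Prod>j<p. x (js ! j))"
    using P x idx_nth by (auto intro!: mult_nonneg_nonneg prod_nonneg P[THEN less_imp_le])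
qed

lemma smp_pos: "smp n x \<Longrightarrow> \<exists>j<n. 0 < x j"
proof (rule ccontr)
  assume "smp n x" "\<not> (\<exists>j<n. 0 < x j)"
  then have "\<And>j. j < n \<Longrightarrow> x j = 0" unfolding smp_def by force
  then have "(\<Sum>i<n. x i) = 0" by simp
  then show False using \<open>smp n x\<close> unfolding smp_def by simp
qed


lemma pcore:
  assumes p: "p \<ge> 1" and n: "n \<ge> 1"
    and P: "\<And>i js. i < n \<Longrightarrow> js \<in> idx p n \<Longrightarrow> 0 < P (i # js)"
  shows "\<exists>lam x. smp n x \<and> (\<forall>i<n. tapp p n P x i = lam * x i ^ p)
           \<and> Min ((\<lambda>i. tapp p n P (\<lambda>_. 1) i) ` {..<n}) \<le> lam"
proof -
  define rs where "rs i = tapp p n P (\<lambda>_. 1) i" for i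
  define r0 where "r0 = Min (rs ` {..<n})"
  define F where "F = {\<mu>. \<exists>x. smp n x \<and> (\<forall>i<n. \<mu> * x i ^ p \<le> tapp p n P x i)}"
  have P0: "\<And>i js. i < n \<Longrightarrow> js \<in> idx p n \<Longrightarrow> 0 \<le> P (i # js)" using P less_imp_le by blast
  have "0 \<in> {..<n}" using n by simp
  then have nne: "{..<n} \<noteq> {}" by blast
  have rs_pos: "\<And>i. i < n \<Longrightarrow> 0 < rs i"
    unfolding rs_def using n by (intro tapp_pos[of _ _ _ _ _ 0]) (auto intro: P)
  have r0_pos: "0 < r0" unfolding r0_def using nne rs_pos by (simp add: Min_gr_iff)
  have r0_le: "\<And>i. i < n \<Longrightarrow> r0 \<le> rs i" unfolding r0_def by simp
  define u where "u = (\<lambda>j::nat. (1 / real n) * 1)"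
  have u_smp: "smp n u" unfolding smp_def u_def using n by simp
  have "r0 \<in> F" unfolding F_def
  proof (intro CollectI exI[of _ u] conjI allI impI u_smp)
    fix i assume i: "i < n"
    have "tapp p n P u i = (1 / real n) ^ p * rs i" unfolding u_def rs_def by (rule tapp_scale)
    moreover have "u i ^ p = (1 / real n) ^ p" unfolding u_def by simp
    moreover have "r0 * (1 / real n) ^ p \<le> rs i * (1 / real n) ^ p"
      by (rule mult_right_mono) (use r0_le[OF i] in auto)
    ultimately show "r0 * u i ^ p \<le> tapp p n P u i"
      by (simp add: mult.commute)
  qed
  then have Fne: "F \<noteq> {}" by auto
  have Fbd: "\<And>\<mu>. \<mu> \<in> F \<Longrightarrow> \<mu> \<le> Max (rs ` {..<n})"
  proof -
    fix \<mu> assume "\<mu> \<in> F"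
    then obtain x where x: "smp n x" "\<And>i. i < n \<Longrightarrow> \<mu> * x i ^ p \<le> tapp p n P x i"
      unfolding F_def by blast
    show "\<mu> \<le> Max (rs ` {..<n})" unfolding rs_def by (rule ub_real[OF p n P0 x])
  qed
  then have bdd: "bdd_above F" by (rule bdd_aboveI)
  define ms where "ms = Sup F"
  have r0_ms: "r0 \<le> ms" unfolding ms_def using \<open>r0 \<in> F\<close> bdd by (rule cSup_upper)
  have ms_pos: "0 < ms" using r0_pos r0_ms by simp
  have in_F_le: "\<And>\<mu>. \<mu> \<in> F \<Longrightarrow> \<mu> \<le> ms" unfolding ms_def using bdd by (simp add: cSup_upper)
  have "\<forall>k. \<exists>z. fst z \<in> F \<and> ms - inverse (real (Suc k)) < fst z \<and> smp n (snd z)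
             \<and> (\<forall>i<n. fst z * snd z i ^ p \<le> tapp p n P (snd z) i)"
  proof
    fix k
    have "ms - inverse (real (Suc k)) < ms" by simp
    then obtain \<mu> where mu: "\<mu> \<in> F" "ms - inverse (real (Suc k)) < \<mu>"
      using less_cSupD[OF Fne] unfolding ms_def by blast
    then obtain x where "smp n x" "\<forall>i<n. \<mu> * x i ^ p \<le> tapp p n P x i" unfolding F_def by blast
    then show "\<exists>z. fst z \<in> F \<and> ms - inverse (real (Suc k)) < fst z \<and> smp n (snd z)
             \<and> (\<forall>i<n. fst z * snd z i ^ p \<le> tapp p n P (snd z) i)"
      using mu by (intro exI[of _ "(\<mu>, x)"]) auto
  qed
  from choice[OF this] obtain g where g0: "\<forall>k. fst (g k) \<in> F \<and> ms - inverse (real (Suc k)) < fst (g k) \<and> smp n (snd (g k))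
             \<and> (\<forall>i<n. fst (g k) * snd (g k) i ^ p \<le> tapp p n P (snd (g k)) i)" ..
  have g: "\<And>k. fst (g k) \<in> F" "\<And>k. ms - inverse (real (Suc k)) < fst (g k)"
    "\<And>k. smp n (snd (g k))" "\<And>k i. i < n \<Longrightarrow> fst (g k) * snd (g k) i ^ p \<le> tapp p n P (snd (g k)) i"
    using g0 by auto
  define mu where "mu k = fst (g k)" for k
  define X where "X k = snd (g k)" for k
  have Xb: "\<And>k i. i < n \<Longrightarrow> \<bar>X k i\<bar> \<le> 1"
  proof -
    fix k i assume i: "i < n"
    have "0 \<le> X k i" using g(3)[of k] i unfolding X_def smp_def by auto
    moreover have "X k i \<le> 1" using smp_le1[OF g(3)[of k] i] unfolding X_def .
    ultimately show "\<bar>X k i\<bar> \<le> 1" by simp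
  qed
  obtain r L where r: "strict_mono r" and L: "\<And>i. i < n \<Longrightarrow> (\<lambda>k. X (r k) i) \<longlonglongrightarrow> L i"
    using bw[of n X 1, OF Xb] by blast
  have L_nn: "\<And>i. i < n \<Longrightarrow> 0 \<le> L i"
  proof -
    fix i assume i: "i < n"
    show "0 \<le> L i"
      by (rule LIMSEQ_le_const[OF L[OF i]]) (use g(3) i in \<open>auto simp: X_def smp_def\<close>)
  qed
  have "(\<lambda>k. \<Sum>i<n. X (r k) i) \<longlonglongrightarrow> (\<Sum>i<n. L i)" by (intro tendsto_sum L) simp
  moreover have "(\<lambda>k. \<Sum>i<n. X (r k) i) = (\<lambda>k. 1)" using g(3) unfolding X_def smp_def by simp
  ultimately have "(\<lambda>k. 1) \<longlonglongrightarrow> (\<Sum>i<n. L i)" by simp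
  then have "(\<Sum>i<n. L i) = 1" using LIMSEQ_const_iff by (metis (no_types))
  with L_nn have L_smp: "smp n L" unfolding smp_def by simp
  have mu_lim: "(\<lambda>k. mu (r k)) \<longlonglongrightarrow> ms"
  proof (rule tendsto_sandwich[of "\<lambda>k. ms - inverse (real (Suc k))" _ _ "\<lambda>k. ms"])
    show "\<forall>\<^sub>F k in sequentially. ms - inverse (real (Suc k)) \<le> mu (r k)"
    proof (intro always_eventually allI)
      fix k
      have "k \<le> r k" using r by (rule seq_suble)
      then have "inverse (real (Suc (r k))) \<le> inverse (real (Suc k))"
        by (intro le_imp_inverse_le) auto
      then show "ms - inverse (real (Suc k)) \<le> mu (r k)" using g(2)[of "r k"] unfolding mu_def by linarith
    qed
    show "\<forall>\<^sub>F k in sequentially. mu (r k) \<le> ms" using in_F_le g(1) unfolding mu_def by simp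
    show "(\<lambda>k. ms - inverse (real (Suc k))) \<longlonglongrightarrow> ms"
      using tendsto_diff[OF tendsto_const LIMSEQ_inverse_real_of_nat, of ms] by simp
  qed simp
  have L_ineq: "\<And>i. i < n \<Longrightarrow> ms * L i ^ p \<le> tapp p n P L i"
  proof -
    fix i assume i: "i < n"
    show "ms * L i ^ p \<le> tapp p n P L i"
    proof (rule LIMSEQ_le)
      show "(\<lambda>k. mu (r k) * X (r k) i ^ p) \<longlonglongrightarrow> ms * L i ^ p"
        by (intro tendsto_mult tendsto_power mu_lim L i)
      show "(\<lambda>k. tapp p n P (X (r k)) i) \<longlonglongrightarrow> tapp p n P L i"
        by (rule tapp_tendsto) (auto intro: L)
      show "\<exists>N. \<forall>k\<ge>N. mu (r k) * X (r k) i ^ p \<le> tapp p n P (X (r k)) i"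
        using g(4)[OF i] unfolding mu_def X_def by blast
    qed
  qed
  have eig: "\<forall>i<n. tapp p n P L i = ms * L i ^ p"
  proof (rule ccontr)
    assume "\<not> (\<forall>i<n. tapp p n P L i = ms * L i ^ p)"
    then obtain i0 where i0: "i0 < n" "ms * L i0 ^ p < tapp p n P L i0"
      using L_ineq by (metis order.not_eq_order_implies_strict)
    have p0: "0 < p" using p by simp
    define w where "w i = root p (tapp p n P L i)" for i
    define a where "a = root p ms"
    obtain j0 where j0: "j0 < n" "0 < L j0" using smp_pos[OF L_smp] by blast
    have tL_pos: "\<And>i. i < n \<Longrightarrow> 0 < tapp p n P L i"
    proof -
      fix i assume i: "i < n"
      show "0 < tapp p n P L i"
        by (rule tapp_pos[of p n P i L j0]) (use P[OF i] L_nn j0 in auto)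
    qed
    have w_pos: "\<And>i. i < n \<Longrightarrow> 0 < w i" unfolding w_def using tL_pos p0 by simp
    have aL: "\<And>j. j < n \<Longrightarrow> a * L j = root p (ms * L j ^ p)"
      unfolding a_def real_root_mult using L_nn p0 by (simp add: real_root_power_cancel)
    have aL_le: "\<And>j. j < n \<Longrightarrow> 0 \<le> a * L j \<and> a * L j \<le> w j"
    proof -
      fix j assume j: "j < n"
      have "0 \<le> a" unfolding a_def using ms_pos p0 by simp
      then show "0 \<le> a * L j \<and> a * L j \<le> w j"
        unfolding aL[OF j] w_def using L_nn[OF j] L_ineq[OF j] p0 ms_pos
        by (auto intro: real_root_le_mono)
    qed
    have aL_lt: "a * L i0 < w i0"
      unfolding aL[OF i0(1)] w_def using i0 p0 by (auto intro: real_root_less_mono)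
    have strict: "\<And>i. i < n \<Longrightarrow> ms * w i ^ p < tapp p n P w i"
    proof -
      fix i assume i: "i < n"
      have "ms * w i ^ p = ms * tapp p n P L i"
        unfolding w_def using tL_pos[OF i] p0 by simp
      also have "\<dots> = a ^ p * tapp p n P L i" unfolding a_def using ms_pos p0 by simp
      also have "\<dots> = tapp p n P (\<lambda>j. a * L j) i" by (rule tapp_scale[symmetric])
      also have "\<dots> < tapp p n P w i"
        unfolding tapp_def
      proof (rule sum_strict_mono_ex1[OF finite_idx])
        show "\<forall>js\<in>idx p n. P (i # js) * (\<Prod>j<p. a * L (js ! j)) \<le> P (i # js) * (\<Prod>j<p. w (js ! j))"
          using aL_le P0[OF i] idx_nth
          by (auto intro!: mult_left_mono prod_mono)
        show "\<exists>js\<in>idx p n. P (i # js) * (\<Prod>j<p. a * L (js ! j)) < P (i # js) * (\<Prod>j<p. w (js ! j))"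
        proof (intro bexI[OF _ replicate_idx[OF i0(1)]])
          have "(a * L i0) ^ p < w i0 ^ p"
            using aL_lt aL_le[OF i0(1)] p0 by (intro power_strict_mono) auto
          then show "P (i # replicate p i0) * (\<Prod>j<p. a * L (replicate p i0 ! j))
              < P (i # replicate p i0) * (\<Prod>j<p. w (replicate p i0 ! j))"
            using prod_replicate[of "\<lambda>j. a * L j" p i0] prod_replicate[of w p i0]
              P[OF i replicate_idx[OF i0(1)]] by simp
        qed
      qed
      finally show "ms * w i ^ p < tapp p n P w i" .
    qed
    define mu' where "mu' = Min ((\<lambda>i. tapp p n P w i / w i ^ p) ` {..<n})"
    have mu'_gt: "ms < mu'" unfolding mu'_def using nne strict w_pos
      by (auto simp: Min_gr_iff pos_less_divide_eq)
    have mu'_le: "\<And>i. i < n \<Longrightarrow> mu' * w i ^ p \<le> tapp p n P w i"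
    proof -
      fix i assume i: "i < n"
      have "mu' \<le> tapp p n P w i / w i ^ p" unfolding mu'_def using i by simp
      then show "mu' * w i ^ p \<le> tapp p n P w i" using w_pos[OF i] by (simp add: pos_le_divide_eq)
    qed
    define s where "s = (\<Sum>i<n. w i)"
    have s_pos: "0 < s" unfolding s_def using nne w_pos by (intro sum_pos) auto
    define w' where "w' = (\<lambda>j. (1 / s) * w j)"
    have "(\<Sum>j<n. (1 / s) * w j) = (1 / s) * s" unfolding s_def by (rule sum_distrib_left[symmetric])
    then have "smp n w'" unfolding smp_def w'_def using s_pos w_pos
      by (auto intro: less_imp_le)
    moreover have "\<forall>i<n. mu' * w' i ^ p \<le> tapp p n P w' i"
    proof (intro allI impI)
      fix i assume i: "i < n"
      have "tapp p n P w' i = (1 / s) ^ p * tapp p n P w i" unfolding w'_def by (rule tapp_scale)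
      moreover have "w' i ^ p = (1 / s) ^ p * w i ^ p" unfolding w'_def by (simp add: power_divide)
      ultimately show "mu' * w' i ^ p \<le> tapp p n P w' i"
        using mu'_le[OF i] s_pos by (simp add: mult.left_commute mult_left_mono)
    qed
    ultimately have "mu' \<in> F" unfolding F_def by blast
    then show False using in_F_le mu'_gt by fastforce
  qed
  show ?thesis using L_smp eig r0_ms unfolding r0_def rs_def by blast
qed


lemma tapp_add: "tapp p n (\<lambda>l. Q l + e) x i = tapp p n Q x i + e * tapp p n (\<lambda>_. 1) x i"
  unfolding tapp_def by (simp add: distrib_right sum.distrib sum_distrib_left)

lemma core:
  assumes p: "p \<ge> 1" and n: "n \<ge> 1"
    and Q: "\<And>i js. i < n \<Longrightarrow> js \<in> idx p n \<Longrightarrow> 0 \<le> Q (i # js)"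
  shows "\<exists>lam x. smp n x \<and> (\<forall>i<n. tapp p n Q x i = lam * x i ^ p)
           \<and> Min ((\<lambda>i. tapp p n Q (\<lambda>_. 1) i) ` {..<n}) \<le> lam"
proof -
  define e where "e k = inverse (real (Suc k))" for k
  define Pk where "Pk k = (\<lambda>l. Q l + e k)" for k
  have e_pos: "\<And>k. 0 < e k" unfolding e_def by auto
  have e_le: "\<And>k. e k \<le> 1" unfolding e_def by (simp add: inverse_le_1_iff)
  define rq where "rq i = tapp p n Q (\<lambda>_. 1) i" for i
  define C where "C = tapp p n (\<lambda>_. 1) (\<lambda>_. 1) (0::nat)"
  have C_nn: "0 \<le> C" unfolding C_def by (rule tapp_nonneg) auto
  have C_eq: "\<And>i. tapp p n (\<lambda>_. 1) (\<lambda>_. 1) i = C" unfolding C_def tapp_def by simp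
  have rk: "\<And>k i. tapp p n (Pk k) (\<lambda>_. 1) i = rq i + e k * C"
    unfolding Pk_def rq_def tapp_add C_eq ..
  have "0 \<in> {..<n}" using n by simp
  then have nne: "{..<n} \<noteq> {}" by blast
  have "\<forall>k. \<exists>z. smp n (snd z) \<and> (\<forall>i<n. tapp p n (Pk k) (snd z) i = fst z * snd z i ^ p)
           \<and> Min ((\<lambda>i. tapp p n (Pk k) (\<lambda>_. 1) i) ` {..<n}) \<le> fst z"
  proof
    fix k
    have "\<And>i js. i < n \<Longrightarrow> js \<in> idx p n \<Longrightarrow> 0 < Pk k (i # js)"
      unfolding Pk_def using Q e_pos by (simp add: add_nonneg_pos)
    from pcore[of p n "Pk k", OF p n this] obtain lam x where
      "smp n x" "\<forall>i<n. tapp p n (Pk k) x i = lam * x i ^ p"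
      "Min ((\<lambda>i. tapp p n (Pk k) (\<lambda>_. 1) i) ` {..<n}) \<le> lam" by blast
    then show "\<exists>z. smp n (snd z) \<and> (\<forall>i<n. tapp p n (Pk k) (snd z) i = fst z * snd z i ^ p)
           \<and> Min ((\<lambda>i. tapp p n (Pk k) (\<lambda>_. 1) i) ` {..<n}) \<le> fst z"
      by (intro exI[of _ "(lam, x)"]) auto
  qed
  from choice[OF this] obtain g where g0: "\<forall>k. smp n (snd (g k)) \<and> (\<forall>i<n. tapp p n (Pk k) (snd (g k)) i = fst (g k) * snd (g k) i ^ p)
           \<and> Min ((\<lambda>i. tapp p n (Pk k) (\<lambda>_. 1) i) ` {..<n}) \<le> fst (g k)" ..
  define lam where "lam k = fst (g k)" for k
  define X where "X k = snd (g k)" for k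
  have X_smp: "\<And>k. smp n (X k)" using g0 unfolding X_def by auto
  have X_eig: "\<And>k i. i < n \<Longrightarrow> tapp p n (Pk k) (X k) i = lam k * X k i ^ p"
    using g0 unfolding X_def lam_def by auto
  have lam_ge: "\<And>k. Min (rq ` {..<n}) \<le> lam k"
  proof -
    fix k
    have "Min ((\<lambda>i. tapp p n (Pk k) (\<lambda>_. 1) i) ` {..<n}) \<in> (\<lambda>i. tapp p n (Pk k) (\<lambda>_. 1) i) ` {..<n}"
      using nne by (intro Min_in) auto
    then obtain i1 where i1: "i1 < n" "Min ((\<lambda>i. tapp p n (Pk k) (\<lambda>_. 1) i) ` {..<n}) = rq i1 + e k * C"
      unfolding rk by auto
    have "Min (rq ` {..<n}) \<le> rq i1" using i1 by simp
    also have "\<dots> \<le> rq i1 + e k * C" using e_pos[of k] C_nn by simp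
    also have "\<dots> \<le> lam k"
    proof -
      have "Min ((\<lambda>i. tapp p n (Pk k) (\<lambda>_. 1) i) ` {..<n}) \<le> lam k"
        using g0 unfolding lam_def by blast
      then show ?thesis using i1(2) by simp
    qed
    finally show "Min (rq ` {..<n}) \<le> lam k" .
  qed
  have lam_le: "\<And>k. lam k \<le> Max (rq ` {..<n}) + C"
  proof -
    fix k
    have P0: "\<And>i js. i < n \<Longrightarrow> js \<in> idx p n \<Longrightarrow> 0 \<le> Pk k (i # js)"
      unfolding Pk_def using Q e_pos by (simp add: add_nonneg_nonneg less_imp_le)
    have "lam k \<le> Max ((\<lambda>i. tapp p n (Pk k) (\<lambda>_. 1) i) ` {..<n})"
    proof (rule ub_real[of p n "Pk k" "X k", OF p n P0 X_smp])
      fix i assume i: "i < n"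
      show "lam k * X k i ^ p \<le> tapp p n (Pk k) (X k) i" using X_eig[OF i, of k] by simp
    qed
    also have "\<dots> \<le> Max (rq ` {..<n}) + C"
    proof (subst Max_le_iff)
      show "\<forall>a\<in>(\<lambda>i. tapp p n (Pk k) (\<lambda>_. 1) i) ` {..<n}. a \<le> Max (rq ` {..<n}) + C"
      proof
        fix a assume "a \<in> (\<lambda>i. tapp p n (Pk k) (\<lambda>_. 1) i) ` {..<n}"
        then obtain i where i: "i < n" "a = rq i + e k * C" unfolding rk by auto
        have "rq i \<le> Max (rq ` {..<n})" using i by simp
        moreover have "e k * C \<le> C" using mult_right_mono[OF e_le[of k] C_nn] by simp
        ultimately show "a \<le> Max (rq ` {..<n}) + C" using i(2) by linarith
      qed
    qed (use nne in auto)
    finally show "lam k \<le> Max (rq ` {..<n}) + C" .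
  qed
  define B where "B = max 1 (\<bar>Min (rq ` {..<n})\<bar> + \<bar>Max (rq ` {..<n}) + C\<bar>)"
  define Y where "Y k = (X k)(n := lam k)" for k
  have Yb: "\<And>k i. i < Suc n \<Longrightarrow> \<bar>Y k i\<bar> \<le> B"
  proof -
    fix k i assume i: "i < Suc n"
    show "\<bar>Y k i\<bar> \<le> B"
    proof (cases "i = n")
      case True
      then show ?thesis unfolding Y_def B_def using lam_ge[of k] lam_le[of k] by auto
    next
      case False
      then have "i < n" using i by simp
      then have "0 \<le> X k i" "X k i \<le> 1" using X_smp[of k] smp_le1[OF X_smp[of k]] unfolding smp_def by auto
      then show ?thesis unfolding Y_def B_def using False by auto
    qed
  qed
  obtain r L where r: "strict_mono r" and L: "\<forall>i<Suc n. (\<lambda>k. Y (r k) i) \<longlonglongrightarrow> L i"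
    using bw[of "Suc n" Y B, OF Yb] by blast
  have LX: "\<And>i. i < n \<Longrightarrow> (\<lambda>k. X (r k) i) \<longlonglongrightarrow> L i"
  proof -
    fix i assume i: "i < n"
    have "(\<lambda>k. Y (r k) i) \<longlonglongrightarrow> L i" using L i by simp
    moreover have "(\<lambda>k. Y (r k) i) = (\<lambda>k. X (r k) i)" unfolding Y_def using i by auto
    ultimately show "(\<lambda>k. X (r k) i) \<longlonglongrightarrow> L i" by simp
  qed
  have Llam: "(\<lambda>k. lam (r k)) \<longlonglongrightarrow> L n"
  proof -
    have "(\<lambda>k. Y (r k) n) \<longlonglongrightarrow> L n" using L by simp
    moreover have "(\<lambda>k. Y (r k) n) = (\<lambda>k. lam (r k))" unfolding Y_def by auto
    ultimately show ?thesis by simp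
  qed
  have L_nn: "\<And>i. i < n \<Longrightarrow> 0 \<le> L i"
  proof -
    fix i assume i: "i < n"
    show "0 \<le> L i"
      by (rule LIMSEQ_le_const[OF LX[OF i]]) (use X_smp i in \<open>auto simp: smp_def\<close>)
  qed
  have "(\<lambda>k. \<Sum>i<n. X (r k) i) \<longlonglongrightarrow> (\<Sum>i<n. L i)" by (intro tendsto_sum LX) simp
  moreover have "(\<lambda>k. \<Sum>i<n. X (r k) i) = (\<lambda>k. 1)" using X_smp unfolding smp_def by simp
  ultimately have "(\<lambda>k. 1) \<longlonglongrightarrow> (\<Sum>i<n. L i)" by simp
  then have "(\<Sum>i<n. L i) = 1" using LIMSEQ_const_iff by (metis (no_types))
  with L_nn have L_smp: "smp n L" unfolding smp_def by simp
  have er: "(\<lambda>k. e (r k)) \<longlonglongrightarrow> 0"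
    using LIMSEQ_subseq_LIMSEQ[OF LIMSEQ_inverse_real_of_nat r] unfolding e_def by (simp add: o_def)
  have eig: "\<forall>i<n. tapp p n Q L i = L n * L i ^ p"
  proof (intro allI impI)
    fix i assume i: "i < n"
    have "(\<lambda>k. tapp p n (Pk (r k)) (X (r k)) i) \<longlonglongrightarrow> tapp p n Q L i"
    proof (rule tapp_tendsto)
      show "\<And>i. i < n \<Longrightarrow> (\<lambda>k. X (r k) i) \<longlonglongrightarrow> L i" by (rule LX)
      fix l show "(\<lambda>k. Pk (r k) l) \<longlonglongrightarrow> Q l"
        unfolding Pk_def using tendsto_add[OF tendsto_const er, of "Q l"] by simp
    qed
    moreover have "(\<lambda>k. tapp p n (Pk (r k)) (X (r k)) i) \<longlonglongrightarrow> L n * L i ^ p"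
      unfolding X_eig[OF i] by (intro tendsto_mult tendsto_power Llam LX i)
    ultimately show "tapp p n Q L i = L n * L i ^ p" by (rule LIMSEQ_unique)
  qed
  have "Min (rq ` {..<n}) \<le> L n"
    by (rule LIMSEQ_le_const[OF Llam]) (use lam_ge in auto)
  then show ?thesis using L_smp eig unfolding rq_def by blast
qed


lemma tensor_apply_real:
  "tensor_apply m n A (\<lambda>j. complex_of_real (x j)) i = complex_of_real (tapp (m - 1) n A x i)"
  unfolding tensor_apply_def tapp_def by simp

lemma upper_eig:
  assumes p: "p = m - 1" and m: "m \<ge> 2" and n: "n \<ge> 1" and A: "nonneg_tensor m n A"
    and y: "\<And>i. i < n \<Longrightarrow> 0 < y i"
    and ev: "tensor_eigenvalue m n A lam"
  shows "\<exists>i<n. cmod lam \<le> tapp p n A y i / y i ^ p"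
proof -
  obtain x where x0: "\<exists>i<n. x i \<noteq> 0" and eq: "\<And>i. i < n \<Longrightarrow> tensor_apply m n A x i = lam * x i ^ (m - 1)"
    using ev unfolding tensor_eigenvalue_def by blast
  have mp: "m = Suc p" using m p by simp
  have Ann: "\<And>i js. i < n \<Longrightarrow> js \<in> idx p n \<Longrightarrow> 0 \<le> A (i # js)"
    using A unfolding nonneg_tensor_def mp by (auto intro: idx_Cons)
  define z where "z j = cmod (x j) / y j" for j
  have "z 0 \<in> z ` {..<n}" using n by simp
  then have "Max (z ` {..<n}) \<in> z ` {..<n}" by (intro Max_in) auto
  then obtain i0 where i0: "i0 < n" "z i0 = Max (z ` {..<n})" by auto
  have zmax: "\<And>j. j < n \<Longrightarrow> z j \<le> z i0" using i0 by simp
  obtain j1 where j1: "j1 < n" "x j1 \<noteq> 0" using x0 by blast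
  have "0 < z j1" unfolding z_def using j1 y by simp
  then have z0: "0 < z i0" using zmax[OF j1(1)] by simp
  have cx: "\<And>j. j < n \<Longrightarrow> cmod (x j) = z j * y j"
  proof -
    fix j assume j: "j < n"
    show "cmod (x j) = z j * y j" unfolding z_def using y[OF j] by simp
  qed
  have "cmod lam * cmod (x i0) ^ p = cmod (tensor_apply m n A x i0)"
    using eq[OF i0(1)] p by (simp add: norm_mult norm_power)
  also have "\<dots> \<le> tapp p n A (\<lambda>j. cmod (x j)) i0"
    unfolding tensor_apply_def tapp_def p[symmetric]
  proof (rule order_trans[OF norm_sum sum_mono])
    fix js assume js: "js \<in> idx p n"
    show "cmod (complex_of_real (A (i0 # js)) * (\<Prod>j<p. x (js ! j))) \<le> A (i0 # js) * (\<Prod>j<p. cmod (x (js ! j)))"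
      using Ann[OF i0(1) js] by (simp add: norm_mult prod_norm)
  qed
  also have "\<dots> \<le> tapp p n A (\<lambda>j. z i0 * y j) i0"
  proof (rule tapp_mono)
    show "\<And>js. js \<in> idx p n \<Longrightarrow> 0 \<le> A (i0 # js)" using Ann[OF i0(1)] .
    fix j assume j: "j < n"
    have "z j * y j \<le> z i0 * y j" using mult_right_mono[OF zmax[OF j] less_imp_le[OF y[OF j]]] .
    then have "cmod (x j) \<le> z i0 * y j" using cx[OF j] by simp
    then show "0 \<le> cmod (x j) \<and> cmod (x j) \<le> z i0 * y j" by simp
  qed
  also have "\<dots> = z i0 ^ p * tapp p n A y i0" by (rule tapp_scale)
  finally have "cmod lam * (z i0 ^ p * y i0 ^ p) \<le> z i0 ^ p * tapp p n A y i0"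
    using cx[OF i0(1)] by (simp add: power_mult_distrib)
  then have "z i0 ^ p * (cmod lam * y i0 ^ p) \<le> z i0 ^ p * tapp p n A y i0"
    by (simp add: mult_ac)
  then have "cmod lam * y i0 ^ p \<le> tapp p n A y i0"
    using z0 by (simp add: mult_le_cancel_left_pos)
  then have "cmod lam \<le> tapp p n A y i0 / y i0 ^ p"
    using y[OF i0(1)] by (simp add: pos_le_divide_eq)
  then show ?thesis using i0(1) by blast
qed

theorem theorem3p1:
  fixes m k n :: nat and A B :: "nat list \<Rightarrow> real"
  assumes "m \<ge> 2" and "k \<ge> 1" and "n \<ge> 1"
    and "nonneg_tensor m n A" and "nonneg_tensor k n B"
    and "\<forall>i<n. row_sum k n B i \<noteq> 0"
  shows "Min ((\<lambda>i. row_sum ((m - 1) * (k - 1) + 1) n (gen_prod m k n A B) i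
                   / (row_sum k n B i) ^ (m - 1)) ` {..<n})
           \<le> tensor_spectral_radius m n A \<and>
         tensor_spectral_radius m n A
           \<le> Max ((\<lambda>i. row_sum ((m - 1) * (k - 1) + 1) n (gen_prod m k n A B) i
                   / (row_sum k n B i) ^ (m - 1)) ` {..<n})"
proof -
  note m = assms(1) and k = assms(2) and n = assms(3) and A = assms(4) and B = assms(5)
  define p where "p = m - 1"
  define y where "y i = row_sum k n B i" for i
  have mp: "m = Suc p" using m p_def by simp
  have p1: "p \<ge> 1" using m p_def by simp
  have y_pos: "\<And>i. i < n \<Longrightarrow> 0 < y i"
  proof -
    fix i assume i: "i < n"
    have "0 \<le> y i" unfolding y_def row_sum_def by (rule sum_nonneg) simp
    moreover have "y i \<noteq> 0" using assms(6) i unfolding y_def by blast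
    ultimately show "0 < y i" by linarith
  qed
  define c where "c i = tapp p n A y i / y i ^ p" for i
  have fc: "(\<lambda>i. row_sum ((m - 1) * (k - 1) + 1) n (gen_prod m k n A B) i
                   / (row_sum k n B i) ^ (m - 1)) ` {..<n} = c ` {..<n}"
  proof (rule image_cong[OF refl])
    fix i assume "i \<in> {..<n}"
    then have i: "i < n" by simp
    show "row_sum ((m - 1) * (k - 1) + 1) n (gen_prod m k n A B) i / (row_sum k n B i) ^ (m - 1) = c i"
      unfolding rowsum_gen_prod[OF m k A B i] c_def tapp_def y_def p_def ..
  qed
  have Ann: "\<And>i js. i < n \<Longrightarrow> js \<in> idx p n \<Longrightarrow> 0 \<le> A (i # js)"
    using A unfolding nonneg_tensor_def mp by (auto intro: idx_Cons)
  define S where "S = {cmod lam | lam. tensor_eigenvalue m n A lam}"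
  have S_le: "\<And>s. s \<in> S \<Longrightarrow> s \<le> Max (c ` {..<n})"
  proof -
    fix s assume "s \<in> S"
    then have "\<exists>lam. s = cmod lam \<and> tensor_eigenvalue m n A lam" unfolding S_def by simp
    then obtain lam where s: "s = cmod lam" and ev: "tensor_eigenvalue m n A lam" by (elim exE conjE)
    have "\<exists>i<n. cmod lam \<le> tapp p n A y i / y i ^ p" by (rule upper_eig[OF p_def m n A y_pos ev])
    then obtain i where i: "i < n" "cmod lam \<le> c i" unfolding c_def by (elim exE conjE) simp
    have "c i \<le> Max (c ` {..<n})" using i by simp
    then show "s \<le> Max (c ` {..<n})" using i(2) s by linarith
  qed
  \<comment> \<open>lower bound via the scaled tensor\<close>
  define Q where "Q l = A l * (\<Prod>j<p. y (tl l ! j)) / y (hd l) ^ p" for l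
  have Qnn: "\<And>i js. i < n \<Longrightarrow> js \<in> idx p n \<Longrightarrow> 0 \<le> Q (i # js)"
  proof -
    fix i js assume i: "i < n" and js: "js \<in> idx p n"
    have "0 \<le> (\<Prod>j<p. y (js ! j))"
    proof (rule prod_nonneg)
      fix j assume "j \<in> {..<p}"
      then have "js ! j < n" using idx_nth[OF js] by simp
      then show "0 \<le> y (js ! j)" using y_pos less_imp_le by blast
    qed
    moreover have "0 \<le> A (i # js)" using Ann[OF i js] .
    moreover have "0 \<le> y i ^ p" using y_pos[OF i] by simp
    ultimately show "0 \<le> Q (i # js)" unfolding Q_def by simp
  qed
  have tQ: "\<And>i x. i < n \<Longrightarrow> tapp p n Q x i * y i ^ p = tapp p n A (\<lambda>j. y j * x j) i"
  proof -
    fix i x assume i: "i < n"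
    have yp: "y i ^ p \<noteq> 0" using y_pos[OF i] by simp
    show "tapp p n Q x i * y i ^ p = tapp p n A (\<lambda>j. y j * x j) i"
      unfolding tapp_def Q_def sum_distrib_right
      by (intro sum.cong refl) (use yp in \<open>simp add: prod.distrib\<close>)
  qed
  have rQ: "\<And>i. i < n \<Longrightarrow> tapp p n Q (\<lambda>_. 1) i = c i"
  proof -
    fix i assume i: "i < n"
    have "tapp p n Q (\<lambda>_. 1) i * y i ^ p = tapp p n A (\<lambda>j. y j * 1) i" by (rule tQ[OF i])
    then have "tapp p n Q (\<lambda>_. 1) i * y i ^ p = tapp p n A y i" by simp
    moreover have "y i ^ p \<noteq> 0" using y_pos[OF i] by simp
    ultimately show "tapp p n Q (\<lambda>_. 1) i = c i" unfolding c_def by (simp add: eq_divide_eq)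
  qed
  obtain lam x where x: "smp n x" and eig: "\<forall>i<n. tapp p n Q x i = lam * x i ^ p"
    and lamge: "Min ((\<lambda>i. tapp p n Q (\<lambda>_. 1) i) ` {..<n}) \<le> lam"
    using core[of p n Q, OF p1 n Qnn] by blast
  have "(\<lambda>i. tapp p n Q (\<lambda>_. 1) i) ` {..<n} = c ` {..<n}"
    by (rule image_cong[OF refl]) (simp add: rQ)
  with lamge have lamge': "Min (c ` {..<n}) \<le> lam" by simp
  define x' where "x' j = y j * x j" for j
  have ev: "tensor_eigenvalue m n A (complex_of_real lam)"
    unfolding tensor_eigenvalue_def
  proof (intro exI[of _ "\<lambda>j. complex_of_real (x' j)"] conjI allI impI)
    obtain j where j: "j < n" "0 < x j" using smp_pos[OF x] by blast
    then have "x' j \<noteq> 0" unfolding x'_def using y_pos[OF j(1)] by simp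
    then show "\<exists>i<n. complex_of_real (x' i) \<noteq> 0" using j by auto
    fix i assume i: "i < n"
    have "tapp p n A x' i = tapp p n Q x i * y i ^ p"
      using tQ[OF i, of x] unfolding x'_def[abs_def] by simp
    also have "\<dots> = lam * x i ^ p * y i ^ p" using eig i by simp
    also have "\<dots> = lam * x' i ^ p" unfolding x'_def by (simp add: power_mult_distrib mult_ac)
    finally have "tapp p n A x' i = lam * x' i ^ p" .
    then show "tensor_apply m n A (\<lambda>j. complex_of_real (x' j)) i = complex_of_real lam * complex_of_real (x' i) ^ (m - 1)"
      unfolding tensor_apply_real p_def by simp
  qed
  then have lamS: "\<bar>lam\<bar> \<in> S" unfolding S_def
    by (intro CollectI exI[of _ "complex_of_real lam"]) simp
  have bdd: "bdd_above S" using S_le by (rule bdd_aboveI)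
  have "\<bar>lam\<bar> \<le> Sup S" using lamS bdd by (rule cSup_upper)
  then have low: "Min (c ` {..<n}) \<le> Sup S" using lamge' by linarith
  have up: "Sup S \<le> Max (c ` {..<n})"
    using lamS S_le by (intro cSup_least) auto
  show ?thesis unfolding fc tensor_spectral_radius_def S_def[symmetric] using low up by simp
qed

end
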